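(* Let $z\in(0,+\infty)^{d_1}\times\{0\}^{d_2}$. Then: (1) the maps $\alpha\mapsto\mathbb{E}[S^{\mathcal C}_\alpha(z)]$ and $\alpha\mapsto\sigma^{\mathcal C}_\alpha(z)$ are non-increasing on $[0,\infty)$; (2) $\lim_{\alpha\to0}\mathbb{E}[S^{\mathcal C}_\alpha(z)]=\mathbb{E}[S^{\mathcal C}_0(z)]$; (3) $\lim_{\alpha\to0}\sigma^{\mathcal C}_\alpha(z)=\sigma^{\mathcal C}_0(z)$.
   Context: Fix $d_1\ge1$, $d_2\ge0$. $\xi$ is a Poisson point process on $\mathbb{R}^{d_1}\times\mathbb{Z}^{d_2}$ with intensity Lebesgue $\otimes$ counting measure; $\mathrm{Proj}^{d_2}$ is the projection on the $\mathbb{Z}^{d_2}$ coordinates. For $\alpha\ge0$: $x\prec_\alpha y$ iff $x_i+\alpha^{1/d_1}<y_i$ for all $i\le d_1$; $x\preceq y$ iff $x_i\le y_i$ for all $i\le d_1$. For $z\in(0,+\infty)^{d_1}\times\{0\}^{d_2}$, $\mathcal{C}_\alpha(z)$ is the set of finite sequences $s=(w(1),\dots,w(k))$, $k\ge0$, of points of $\xi$ with $0\preceq w(1)\prec_\alpha\cdots\prec_\alpha w(k)\prec_\alpha z$; with $w(0)=0,w(k+1)=z$, $V(s)=\sum_{i=1}^{k+1}\|\mathrm{Proj}^{d_2}(w(i))-\mathrm{Proj}^{d_2}(w(i-1))\|_1$, $R(s)=k$, $S^{\mathcal C}_\alpha(z)=\sup_{s\in\mathcal{C}_\alpha(z)}(R(s)-V(s))$,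 and $\sigma^{\mathcal C}_\alpha(z)=\lim_{\lambda\to\infty}\frac1\lambda\mathbb{E}[S^{\mathcal C}_\alpha(\lambda z)]=\sup_{\lambda>0}\frac1\lambda\mathbb{E}[S^{\mathcal C}_\alpha(\lambda z)]\in(0,\infty]$. *)

theory Defs
  imports "HOL-Probability.Probability"
begin

text \<open>Points of R^d1 x Z^d2. The R^d1 part is real^'d1 (d1 = CARD('d1) >= 1);
  the Z^d2 part is a function nat => int which vanishes at indices >= d2.\<close>

type_synonym 'd1 pt = "(real ^ 'd1) \<times> (nat \<Rightarrow> int)"

definition latt :: "nat \<Rightarrow> (nat \<Rightarrow> int) set" where
  "latt d2 = {k. \<forall>j\<ge>d2. k j = 0}"

definition intensity :: "nat \<Rightarrow> 'd1::finite pt set \<Rightarrow> ennreal" where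
  "intensity d2 A = (\<integral>\<^sup>+ k. emeasure lborel {x. (x, k) \<in> A} \<partial>count_space (latt d2))"

definition pt_meas_sets :: "nat \<Rightarrow> 'd1::finite pt set set" where
  "pt_meas_sets d2 = {A. A \<subseteq> UNIV \<times> latt d2 \<and> (\<forall>k. {x. (x, k) \<in> A} \<in> sets lborel)}"

definition count_in :: "('w \<Rightarrow> 'd1::finite pt set) \<Rightarrow> 'd1 pt set \<Rightarrow> 'w \<Rightarrow> nat" where
  "count_in \<xi> A \<omega> = card (\<xi> \<omega> \<inter> A)"

definition poisson_pp :: "nat \<Rightarrow> 'w measure \<Rightarrow> ('w \<Rightarrow> 'd1::finite pt set) \<Rightarrow> bool" where
  "poisson_pp d2 M \<xi> \<longleftrightarrow>
     prob_space M \<and>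
     (\<forall>\<omega>\<in>space M. \<xi> \<omega> \<subseteq> UNIV \<times> latt d2) \<and>
     (\<forall>A\<in>pt_meas_sets d2. intensity d2 A < \<infinity> \<longrightarrow>
        count_in \<xi> A \<in> measurable M (count_space UNIV) \<and>
        (AE \<omega> in M. finite (\<xi> \<omega> \<inter> A)) \<and>
        (\<forall>n::nat. measure M {\<omega>\<in>space M. count_in \<xi> A \<omega> = n}
            = exp (- enn2real (intensity d2 A)) * enn2real (intensity d2 A) ^ n / fact n)) \<and>
     (\<forall>I::nat set. \<forall>A. finite I \<longrightarrow> (\<forall>i\<in>I. A i \<in> pt_meas_sets d2 \<and> intensity d2 (A i) < \<infinity>)
        \<longrightarrow> disjoint_family_on A I
        \<longrightarrow> prob_space.indep_vars M (\<lambda>_. count_space UNIV) (\<lambda>i. count_in \<xi> (A i)) I)"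

definition prec :: "real \<Rightarrow> 'd1::finite pt \<Rightarrow> 'd1 pt \<Rightarrow> bool" where
  "prec \<alpha> p q \<longleftrightarrow> (\<forall>i. fst p $ i + \<alpha> powr (1 / real CARD('d1)) < fst q $ i)"

definition preceq :: "'d1::finite pt \<Rightarrow> 'd1 pt \<Rightarrow> bool" where
  "preceq p q \<longleftrightarrow> (\<forall>i. fst p $ i \<le> fst q $ i)"

definition origin :: "'d1::finite pt" where "origin = (0, \<lambda>_. 0)"

definition zpt :: "real ^ 'd1 \<Rightarrow> 'd1::finite pt" where "zpt z = (z, \<lambda>_. 0)"

definition chains :: "real \<Rightarrow> 'd1::finite pt set \<Rightarrow> real ^ 'd1 \<Rightarrow> 'd1 pt list set" where
  "chains \<alpha> P z = {ws. set ws \<subseteq> P \<and> (ws \<noteq> [] \<longrightarrow> preceq origin (hd ws))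
                      \<and> successively (prec \<alpha>) (ws @ [zpt z])}"

definition l1dist :: "nat \<Rightarrow> (nat \<Rightarrow> int) \<Rightarrow> (nat \<Rightarrow> int) \<Rightarrow> real" where
  "l1dist d2 k l = (\<Sum>j<d2. real_of_int \<bar>k j - l j\<bar>)"

definition Vcost :: "nat \<Rightarrow> real ^ 'd1 \<Rightarrow> 'd1::finite pt list \<Rightarrow> real" where
  "Vcost d2 z ws = (let p = origin # ws @ [zpt z] in
      sum_list (map (\<lambda>(a, b). l1dist d2 (snd a) (snd b)) (zip p (tl p))))"

text \<open>S^C_alpha(z) (nonnegative since the empty chain gives 0).\<close>
definition S_C :: "nat \<Rightarrow> real \<Rightarrow> 'd1::finite pt set \<Rightarrow> real ^ 'd1 \<Rightarrow> ennreal" where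
  "S_C d2 \<alpha> P z = (SUP ws\<in>chains \<alpha> P z. ennreal (real (length ws) - Vcost d2 z ws))"

definition ES :: "nat \<Rightarrow> 'w measure \<Rightarrow> ('w \<Rightarrow> 'd1::finite pt set) \<Rightarrow> real \<Rightarrow> real ^ 'd1 \<Rightarrow> ennreal" where
  "ES d2 M \<xi> \<alpha> z = (\<integral>\<^sup>+ \<omega>. S_C d2 \<alpha> (\<xi> \<omega>) z \<partial>M)"

definition sigma_C :: "nat \<Rightarrow> 'w measure \<Rightarrow> ('w \<Rightarrow> 'd1::finite pt set) \<Rightarrow> real \<Rightarrow> real ^ 'd1 \<Rightarrow> ennreal" where
  "sigma_C d2 M \<xi> \<alpha> z = (SUP t\<in>{0<..}. ES d2 M \<xi> \<alpha> (t *\<^sub>R z) / ennreal t)"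

end

theory Submission
  imports Defs "HOL-Analysis.Analysis"
begin

lemma prec_mono:
  assumes "0 \<le> \<alpha>" "\<alpha> \<le> \<beta>" "prec \<beta> p q"
  shows "prec \<alpha> p q"
proof -
  have "\<alpha> powr (1 / real CARD('a)) \<le> \<beta> powr (1 / real CARD('a))"
    using assms by (intro powr_mono2) auto
  thus ?thesis using assms(3) unfolding prec_def
    by (smt (verit))
qed

lemma chains_mono:
  assumes "0 \<le> \<alpha>" "\<alpha> \<le> \<beta>"
  shows "chains \<beta> P z \<subseteq> chains \<alpha> P z"
proof
  fix ws assume "ws \<in> chains \<beta> P z"
  then have "successively (prec \<beta>) (ws @ [zpt z])" unfolding chains_def by blast
  then have "successively (prec \<alpha>) (ws @ [zpt z])"
    by (rule successively_mono) (rule prec_mono[OF assms])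
  then show "ws \<in> chains \<alpha> P z" using \<open>ws \<in> chains \<beta> P z\<close> unfolding chains_def by blast
qed

lemma S_mono:
  assumes "0 \<le> \<alpha>" "\<alpha> \<le> \<beta>"
  shows "S_C d2 \<beta> P z \<le> S_C d2 \<alpha> P z"
  unfolding S_C_def by (rule SUP_subset_mono[OF chains_mono[OF assms]]) simp

lemma ES_mono:
  assumes "0 \<le> \<alpha>" "\<alpha> \<le> \<beta>"
  shows "ES d2 M \<xi> \<beta> z \<le> ES d2 M \<xi> \<alpha> z"
  unfolding ES_def by (intro nn_integral_mono S_mono[OF assms])

lemma sigma_mono:
  assumes "0 \<le> \<alpha>" "\<alpha> \<le> \<beta>"
  shows "sigma_C d2 M \<xi> \<beta> z \<le> sigma_C d2 M \<xi> \<alpha> z"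
  unfolding sigma_C_def
  by (intro SUP_mono) (auto intro!: divide_right_mono_ennreal ES_mono[OF assms])

lemma lim_from_seq:
  fixes f :: "real \<Rightarrow> ennreal"
  assumes mono: "\<And>\<alpha> \<beta>. 0 \<le> \<alpha> \<Longrightarrow> \<alpha> \<le> \<beta> \<Longrightarrow> f \<beta> \<le> f \<alpha>"
    and sup: "f 0 = (SUP n. f (1 / real (Suc n)))"
  shows "(f \<longlongrightarrow> f 0) (at_right 0)"
proof (rule order_tendstoI)
  fix y assume "y < f 0"
  then obtain n where n: "y < f (1 / real (Suc n))" using sup by (auto simp: less_SUP_iff)
  show "\<forall>\<^sub>F x in at_right 0. y < f x"
    unfolding eventually_at_right_field
  proof (intro exI[of _ "1 / real (Suc n)"] conjI allI impI)
    fix x :: real assume "0 < x" "x < 1 / real (Suc n)"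
    then show "y < f x" using n mono[of x "1 / real (Suc n)"] by auto
  qed simp
next
  fix y assume "f 0 < y"
  show "\<forall>\<^sub>F x in at_right 0. f x < y"
    using eventually_at_right_less[of "0::real"]
  proof (rule eventually_mono)
    fix x :: real assume "0 < x"
    then have "f x \<le> f 0" using mono[of 0 x] by simp
    then show "f x < y" using \<open>f 0 < y\<close> by (rule le_less_trans)
  qed
qed



definition kf :: "nat \<Rightarrow> int list \<Rightarrow> nat \<Rightarrow> int" where
  "kf d2 ks = (\<lambda>j. if j < d2 \<and> j < length ks then ks ! j else 0)"

definition boxr :: "nat \<Rightarrow> ('d1::finite \<Rightarrow> int) \<Rightarrow> (real^'d1) set" where
  "boxr m v = {x. \<forall>i. real_of_int (v i) / real m \<le> x $ i \<and> x $ i < (real_of_int (v i) + 1) / real m}"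

definition cell :: "nat \<Rightarrow> nat \<Rightarrow> ('d1::finite \<Rightarrow> int) \<times> int list \<Rightarrow> 'd1 pt set" where
  "cell d2 m e = boxr m (fst e) \<times> {kf d2 (snd e)}"

lemma kf_latt: "kf d2 ks \<in> latt d2"
  unfolding kf_def latt_def by auto

lemma kf_map: "k \<in> latt d2 \<Longrightarrow> kf d2 (map k [0..<d2]) = k"
  unfolding kf_def latt_def by (auto simp: fun_eq_iff)

lemma boxr_sets: "boxr m v \<in> sets lborel"
proof -
  have "boxr m v = {x\<in>space lborel. \<forall>i\<in>UNIV. real_of_int (v i) / real m \<le> x $ i \<and> x $ i < (real_of_int (v i) + 1) / real m}"
    unfolding boxr_def by auto
  also have "\<dots> \<in> sets lborel" by measurable
  finally show ?thesis .
qed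

lemma boxr_fin: "emeasure lborel (boxr m v) < \<infinity>"
proof -
  have "boxr m v \<subseteq> cbox (\<chi> i. real_of_int (v i) / real m) (\<chi> i. (real_of_int (v i) + 1) / real m)"
  proof
    fix x assume h: "x \<in> boxr m v"
    show "x \<in> cbox (\<chi> i. real_of_int (v i) / real m) (\<chi> i. (real_of_int (v i) + 1) / real m)"
      unfolding mem_box_cart
    proof
      fix i
      from h have "real_of_int (v i) / real m \<le> x $ i \<and> x $ i < (real_of_int (v i) + 1) / real m"
        unfolding boxr_def by blast
      then show "(\<chi> i. real_of_int (v i) / real m) $ i \<le> x $ i \<and> x $ i \<le> (\<chi> i. (real_of_int (v i) + 1) / real m) $ i"
        by simp
    qed
  qed
  then have "emeasure lborel (boxr m v) \<le> emeasure lborel (cbox (\<chi> i. real_of_int (v i) / real m) (\<chi> i. (real_of_int (v i) + 1) / real m))"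
    by (intro emeasure_mono) auto
  then show ?thesis using emeasure_lborel_cbox_finite le_less_trans by blast
qed

lemma cell_ok: "cell d2 m e \<in> pt_meas_sets d2 \<and> intensity d2 (cell d2 m e) < \<infinity>"
proof
  show "cell d2 m e \<in> pt_meas_sets d2"
    unfolding pt_meas_sets_def cell_def using kf_latt[of d2 "snd e"] boxr_sets[of m "fst e"]
    by auto
  have eq: "\<And>k. emeasure lborel {x. (x, k) \<in> cell d2 m e} = emeasure lborel (boxr m (fst e)) * indicator {kf d2 (snd e)} k"
    unfolding cell_def by (auto simp: indicator_def)
  have "intensity d2 (cell d2 m e) = emeasure lborel (boxr m (fst e)) * emeasure (count_space (latt d2)) {kf d2 (snd e)}"
    unfolding intensity_def eq using kf_latt[of d2 "snd e"]
    by (subst nn_integral_cmult_indicator) auto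
  also have "\<dots> = emeasure lborel (boxr m (fst e))"
    using kf_latt[of d2 "snd e"] by (simp add: emeasure_count_space_finite)
  finally show "intensity d2 (cell d2 m e) < \<infinity>" using boxr_fin by simp
qed

lemma Vcost_snd:
  assumes "map snd ws = map snd ws'"
  shows "Vcost d2 z ws = Vcost d2 z ws'"
proof -
  have gen: "map (\<lambda>(a, b). l1dist d2 (snd a) (snd b)) (zip p (tl p))
      = map (\<lambda>(a, b). l1dist d2 a b) (zip (map snd p) (tl (map snd p)))" for p :: "'a pt list"
    by (simp add: zip_map_map map_tl[symmetric] case_prod_beta)
  show ?thesis unfolding Vcost_def Let_def gen using assms by simp
qed

definition okT :: "real \<Rightarrow> real^'d1 \<Rightarrow> nat \<Rightarrow> (('d1::finite \<Rightarrow> int) \<times> int list) list \<Rightarrow> bool" where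
  "okT c z m t \<longleftrightarrow> 0 < m \<and> (t \<noteq> [] \<longrightarrow> (\<forall>i. 0 \<le> fst (hd t) i)) \<and>
     (\<forall>j < length t. \<forall>i. (real_of_int (fst (t!j) i) + 1) / real m + c \<le>
        (if Suc j < length t then real_of_int (fst (t ! Suc j) i) / real m else z $ i))"

definition hits :: "nat \<Rightarrow> ('w \<Rightarrow> 'd1::finite pt set) \<Rightarrow> nat \<Rightarrow> (('d1 \<Rightarrow> int) \<times> int list) list \<Rightarrow> 'w \<Rightarrow> bool" where
  "hits d2 \<xi> m t \<omega> \<longleftrightarrow> (\<forall>e\<in>set t. 1 \<le> count_in \<xi> (cell d2 m e) \<omega>)"

definition valT :: "nat \<Rightarrow> real^'d1 \<Rightarrow> (('d1::finite \<Rightarrow> int) \<times> int list) list \<Rightarrow> ennreal" where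
  "valT d2 z t = ennreal (real (length t) - Vcost d2 z (map (\<lambda>e. (0, kf d2 (snd e))) t))"

definition Tf :: "nat \<Rightarrow> ('w \<Rightarrow> 'd1::finite pt set) \<Rightarrow> real \<Rightarrow> real^'d1 \<Rightarrow> 'w \<Rightarrow> ennreal" where
  "Tf d2 \<xi> c z \<omega> = (SUP mt. if okT c z (fst mt) (snd mt) \<and> hits d2 \<xi> (fst mt) (snd mt) \<omega> then valT d2 z (snd mt) else 0)"

lemma Tf_meas:
  fixes \<xi> :: "'w \<Rightarrow> 'd1::finite pt set"
  assumes "poisson_pp d2 M \<xi>"
  shows "Tf d2 \<xi> c z \<in> borel_measurable M"
proof -
  have cnt: "count_in \<xi> (cell d2 m e) \<in> measurable M (count_space UNIV)" for m e
    using assms cell_ok[of d2 m e] unfolding poisson_pp_def by blast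
  have hs: "{\<omega>\<in>space M. hits d2 \<xi> m t \<omega>} \<in> sets M" for m t
  proof -
    have "{\<omega>\<in>space M. 1 \<le> count_in \<xi> (cell d2 m e) \<omega>} \<in> sets M" for e
    proof -
      have "{\<omega>\<in>space M. 1 \<le> count_in \<xi> (cell d2 m e) \<omega>} = count_in \<xi> (cell d2 m e) -` {1..} \<inter> space M"
        by auto
      then show ?thesis using measurable_sets[OF cnt[of m e], of "{1..}"] by simp
    qed
    then show ?thesis unfolding hits_def
      by (intro sets.sets_Collect_finite_All) auto
  qed
  show ?thesis unfolding Tf_def
  proof (rule borel_measurable_SUP)
    fix mt :: "nat \<times> (('d1 \<Rightarrow> int) \<times> int list) list"
    show "(\<lambda>\<omega>. if okT c z (fst mt) (snd mt) \<and> hits d2 \<xi> (fst mt) (snd mt) \<omega> then valT d2 z (snd mt) else 0) \<in> borel_measurable M"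
    proof (cases "okT c z (fst mt) (snd mt)")
      case True
      then show ?thesis using hs[of "fst mt" "snd mt"] by (simp add: measurable_If)
    qed simp
  qed simp
qed

lemma okT_mono: "c \<le> c' \<Longrightarrow> okT c' z m t \<Longrightarrow> okT c z m t"
  unfolding okT_def by (smt (verit))

lemma Tf_mono: "c \<le> c' \<Longrightarrow> Tf d2 \<xi> c' z \<omega> \<le> Tf d2 \<xi> c z \<omega>"
  unfolding Tf_def
  apply (intro SUP_mono)
  subgoal for mt by (rule bexI[of _ mt]) (auto dest: okT_mono)
  done

lemma cell_mem: "x \<in> cell d2 m e \<longleftrightarrow> (\<forall>i. real_of_int (fst e i) / real m \<le> fst x $ i \<and> fst x $ i < (real_of_int (fst e i) + 1) / real m) \<and> snd x = kf d2 (snd e)"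
  unfolding cell_def boxr_def by (cases x) auto

lemma Tf_le_S:
  fixes \<xi> :: "'w \<Rightarrow> 'd1::finite pt set" and z :: "real^'d1"
  assumes "0 \<le> \<alpha>"
  shows "Tf d2 \<xi> (\<alpha> powr (1/real CARD('d1))) z \<omega> \<le> S_C d2 \<alpha> (\<xi> \<omega>) z"
  unfolding Tf_def
proof (rule SUP_least)
  define c where "c = \<alpha> powr (1/real CARD('d1))"
  fix mt :: "nat \<times> (('d1 \<Rightarrow> int) \<times> int list) list"
  obtain m t where mt: "mt = (m, t)" by (cases mt)
  show "(if okT (\<alpha> powr (1/real CARD('d1))) z (fst mt) (snd mt) \<and> hits d2 \<xi> (fst mt) (snd mt) \<omega> then valT d2 z (snd mt) else 0) \<le> S_C d2 \<alpha> (\<xi> \<omega>) z"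
  proof (cases "okT c z m t \<and> hits d2 \<xi> m t \<omega>")
    case False then show ?thesis by (auto simp: mt c_def)
  next
    case True
    then have ok: "okT c z m t" and h: "hits d2 \<xi> m t \<omega>" by auto
    have ne: "\<exists>q. q \<in> \<xi> \<omega> \<inter> cell d2 m e" if "e \<in> set t" for e
    proof (rule ccontr)
      assume "\<not> ?thesis"
      then have "\<xi> \<omega> \<inter> cell d2 m e = {}" by blast
      then show False using h that unfolding hits_def count_in_def by fastforce
    qed
    define p where "p e = (SOME q. q \<in> \<xi> \<omega> \<inter> cell d2 m e)" for e
    have p: "p e \<in> \<xi> \<omega> \<inter> cell d2 m e" if "e \<in> set t" for e
      unfolding p_def using ne[OF that] by (rule someI_ex)
    define ps where "ps = map p t"
    have lp: "length ps = length t" by (simp add: ps_def)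
    have sn: "map snd ps = map snd (map (\<lambda>e. (0::real^'d1, kf d2 (snd e))) t)"
      unfolding ps_def using p by (auto simp: cell_mem)
    have m0: "0 < m" using ok unfolding okT_def by blast
    have succ: "successively (prec \<alpha>) (ps @ [zpt z])"
      unfolding successively_conv_nth
    proof (intro allI impI)
      fix j assume "Suc j < length (ps @ [zpt z])"
      then have j: "j < length t" using lp by simp
      have tj: "t ! j \<in> set t" using j by simp
      have A: "(ps @ [zpt z]) ! j = p (t ! j)" using j lp by (simp add: nth_append ps_def)
      show "prec \<alpha> ((ps @ [zpt z]) ! j) ((ps @ [zpt z]) ! Suc j)"
        unfolding prec_def A
      proof
        fix i
        have x1: "fst (p (t!j)) $ i < (real_of_int (fst (t!j) i) + 1) / real m"
          using p[OF tj] by (simp add: cell_mem)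
        have o: "(real_of_int (fst (t!j) i) + 1) / real m + c \<le>
          (if Suc j < length t then real_of_int (fst (t ! Suc j) i) / real m else z $ i)"
          using ok j unfolding okT_def by blast
        show "fst (p (t ! j)) $ i + \<alpha> powr (1 / real CARD('d1)) < fst ((ps @ [zpt z]) ! Suc j) $ i"
        proof (cases "Suc j < length t")
          case True
          have ts: "t ! Suc j \<in> set t" using True by simp
          have "(ps @ [zpt z]) ! Suc j = p (t ! Suc j)" using True lp by (simp add: nth_append ps_def)
          moreover have "real_of_int (fst (t ! Suc j) i) / real m \<le> fst (p (t ! Suc j)) $ i"
            using p[OF ts] by (simp add: cell_mem)
          ultimately show ?thesis using x1 o True unfolding c_def by simp
        next
          case False
          then have "Suc j = length ps" using j lp by simp
          then have "(ps @ [zpt z]) ! Suc j = zpt z" by (simp add: nth_append)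
          then show ?thesis using x1 o False unfolding c_def by (simp add: zpt_def)
        qed
      qed
    qed
    have hd: "preceq origin (hd ps)" if "ps \<noteq> []"
    proof -
      have "t \<noteq> []" using that lp by auto
      then have ht: "hd t \<in> set t" and hps: "hd ps = p (hd t)" by (auto simp: ps_def hd_map)
      have "\<forall>i. 0 \<le> fst (hd t) i" using ok \<open>t \<noteq> []\<close> unfolding okT_def by blast
      then show ?thesis using p[OF ht] m0 unfolding preceq_def origin_def hps
        by (auto simp: cell_mem intro: order_trans[rotated])
    qed
    have inC: "ps \<in> chains \<alpha> (\<xi> \<omega>) z"
      unfolding chains_def using succ hd p by (auto simp: ps_def)
    have "valT d2 z t = ennreal (real (length ps) - Vcost d2 z ps)"
      unfolding valT_def lp using Vcost_snd[OF sn] by simp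
    also have "\<dots> \<le> S_C d2 \<alpha> (\<xi> \<omega>) z"
      unfolding S_C_def by (rule SUP_upper[OF inC])
    finally show ?thesis using True by (simp add: mt c_def)
  qed
qed

lemma fl_facts:
  fixes x :: real
  assumes "0 < m"
  shows "real_of_int \<lfloor>x * m\<rfloor> / m \<le> x" "x < (real_of_int \<lfloor>x * m\<rfloor> + 1) / m"
    "x < real_of_int \<lfloor>x * m\<rfloor> / m + 1 / m" "(real_of_int \<lfloor>x * m\<rfloor> + 1) / m \<le> x + 1 / m"
proof -
  have a: "real_of_int \<lfloor>x * m\<rfloor> \<le> x * m" by (rule of_int_floor_le)
  have b: "x * m < real_of_int \<lfloor>x * m\<rfloor> + 1" by (rule real_of_int_floor_add_one_gt)
  show "real_of_int \<lfloor>x * m\<rfloor> / m \<le> x" using a assms by (simp add: divide_simps)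
  show "x < (real_of_int \<lfloor>x * m\<rfloor> + 1) / m" using b assms by (simp add: divide_simps)
  show "x < real_of_int \<lfloor>x * m\<rfloor> / m + 1 / m" using b assms by (simp add: divide_simps)
  show "(real_of_int \<lfloor>x * m\<rfloor> + 1) / m \<le> x + 1 / m" using a assms by (simp add: divide_simps)
qed



lemma S0_le:
  fixes \<xi> :: "'w \<Rightarrow> 'd1::finite pt set" and z :: "real^'d1"
  assumes sub: "\<xi> \<omega> \<subseteq> UNIV \<times> latt d2" and fin: "\<forall>m e. finite (\<xi> \<omega> \<inter> cell d2 m e)"
  shows "S_C d2 0 (\<xi> \<omega>) z \<le> (SUP n. Tf d2 \<xi> ((1/real (Suc n)) powr (1/real CARD('d1))) z \<omega>)"
  unfolding S_C_def
proof (rule SUP_least)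
  fix ws assume ws: "ws \<in> chains 0 (\<xi> \<omega>) z"
  define W where "W = ws @ [zpt z]"
  have gap: "fst (W!j) $ i < fst (W!Suc j) $ i" if "Suc j < length W" for j i
  proof -
    have "successively (prec 0) W" using ws unfolding chains_def W_def by blast
    then have "prec 0 (W!j) (W!Suc j)" using that by (simp add: successively_conv_nth)
    then show ?thesis unfolding prec_def by simp
  qed
  define G where "G = {fst (W!Suc j) $ i - fst (W!j) $ i | j i. Suc j < length W}"
  have finG: "finite G"
  proof -
    have "G \<subseteq> (\<lambda>(j, i). fst (W!Suc j) $ i - fst (W!j) $ i) ` ({..<length W} \<times> UNIV)"
    proof
      fix g assume "g \<in> G"
      then obtain j i where ji: "g = fst (W!Suc j) $ i - fst (W!j) $ i" "Suc j < length W"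
        unfolding G_def by blast
      then show "g \<in> (\<lambda>(j, i). fst (W!Suc j) $ i - fst (W!j) $ i) ` ({..<length W} \<times> UNIV)"
        by (intro image_eqI[of _ _ "(j, i)"]) auto
    qed
    then show ?thesis by (rule finite_subset) simp
  qed
  have Gpos: "\<forall>g\<in>insert 1 G. 0 < g" unfolding G_def using gap by auto
  define \<delta> where "\<delta> = Min (insert 1 G) / 3"
  have \<delta>pos: "0 < \<delta>" unfolding \<delta>_def using finG Gpos by (simp add: Min_gr_iff)
  have gap3: "fst (W!j) $ i + 3 * \<delta> \<le> fst (W!Suc j) $ i" if "Suc j < length W" for j i
  proof -
    have "fst (W!Suc j) $ i - fst (W!j) $ i \<in> insert 1 G" unfolding G_def using that by blast
    then have "Min (insert 1 G) \<le> fst (W!Suc j) $ i - fst (W!j) $ i" using finG by simp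
    then show ?thesis unfolding \<delta>_def by simp
  qed
  define d where "d = real CARD('d1)"
  have dpos: "0 < d" unfolding d_def by simp
  obtain n where n: "inverse (real (Suc n)) < \<delta> powr d"
    using reals_Archimedean[of "\<delta> powr d"] \<delta>pos by (auto simp: powr_gt_zero)
  define c where "c = (1/real (Suc n)) powr (1/d)"
  have c\<delta>: "c < \<delta>"
  proof -
    have "c < (\<delta> powr d) powr (1/d)" unfolding c_def using n dpos
      by (intro powr_less_mono2) (auto simp: field_simps)
    also have "\<dots> = \<delta>" using dpos \<delta>pos by (simp add: powr_powr)
    finally show ?thesis .
  qed
  obtain m0 where m0: "inverse (real (Suc m0)) < \<delta>"
    using reals_Archimedean[of \<delta>] \<delta>pos by blast
  define m where "m = Suc m0"
  have mpos: "0 < m" "(0::real) < real m" unfolding m_def by auto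
  have m\<delta>: "1 / real m < \<delta>" using m0 unfolding m_def by (simp add: field_simps)
  define f where "f w = ((\<lambda>i. \<lfloor>fst w $ i * real m\<rfloor>), map (snd w) [0..<d2])" for w :: "'d1 pt"
  define t where "t = map f ws"
  have lt: "length t = length ws" unfolding t_def by simp
  have Wws: "W ! j = ws ! j" if "j < length ws" for j using that unfolding W_def by (simp add: nth_append)
  have wcell: "w \<in> cell d2 m (f w)" if "w \<in> \<xi> \<omega>" for w
  proof -
    have "snd w \<in> latt d2" using sub that by auto
    then show ?thesis unfolding cell_mem f_def using fl_facts(1,2)[OF mpos(2)] by (simp add: kf_map)
  qed
  have ok: "okT c z m t"
    unfolding okT_def
  proof (intro conjI impI allI)
    show "0 < m" by (rule mpos)
  next
    fix i assume "t \<noteq> []"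
    then have "ws \<noteq> []" unfolding t_def by simp
    then have "preceq origin (hd ws)" using ws unfolding chains_def by blast
    then have "0 \<le> fst (hd ws) $ i" unfolding preceq_def origin_def by auto
    then show "0 \<le> fst (hd t) i" using \<open>ws \<noteq> []\<close> mpos unfolding t_def f_def by (simp add: hd_map)
  next
    fix j i assume j: "j < length t"
    then have j': "j < length ws" using lt by simp
    define x where "x = fst (ws ! j) $ i"
    have tj: "fst (t ! j) i = \<lfloor>x * real m\<rfloor>" unfolding t_def f_def x_def using j' by simp
    have hi: "(real_of_int (fst (t!j) i) + 1) / real m < x + \<delta>"
      using fl_facts(4)[OF mpos(2), of x] m\<delta> tj by simp
    have g3: "x + 3 * \<delta> \<le> fst (W!Suc j) $ i" using gap3[of j i] j' Wws[OF j'] unfolding x_def W_def by simp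
    show "(real_of_int (fst (t!j) i) + 1) / real m + c \<le>
        (if Suc j < length t then real_of_int (fst (t ! Suc j) i) / real m else z $ i)"
    proof (cases "Suc j < length t")
      case True
      define y where "y = fst (ws ! Suc j) $ i"
      have tj1: "fst (t ! Suc j) i = \<lfloor>y * real m\<rfloor>" unfolding t_def f_def y_def using True lt by simp
      have "y < real_of_int \<lfloor>y * real m\<rfloor> / real m + 1 / real m" by (rule fl_facts(3)[OF mpos(2)])
      moreover have "fst (W!Suc j) $ i = y" using Wws[of "Suc j"] True lt unfolding y_def by simp
      ultimately show ?thesis using True tj1 hi g3 c\<delta> m\<delta> by simp
    next
      case False
      then have "Suc j = length ws" using j lt by simp
      then have "W ! Suc j = zpt z" unfolding W_def by (simp add: nth_append)
      then show ?thesis using False hi g3 c\<delta> \<delta>pos by (simp add: zpt_def)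
    qed
  qed
  have hts: "hits d2 \<xi> m t \<omega>"
    unfolding hits_def
  proof
    fix e assume "e \<in> set t"
    then obtain w where w: "w \<in> set ws" "e = f w" unfolding t_def by auto
    have "w \<in> \<xi> \<omega>" using ws w(1) unfolding chains_def by blast
    then have "w \<in> \<xi> \<omega> \<inter> cell d2 m e" using wcell w(2) by blast
    moreover have "finite (\<xi> \<omega> \<inter> cell d2 m e)" using fin by blast
    ultimately have "card (\<xi> \<omega> \<inter> cell d2 m e) \<noteq> 0" by (metis card_0_eq empty_iff)
    then show "1 \<le> count_in \<xi> (cell d2 m e) \<omega>" unfolding count_in_def by simp
  qed
  have sn: "map snd ws = map snd (map (\<lambda>e. (0::real^'d1, kf d2 (snd e))) t)"
  proof -
    have "snd w \<in> latt d2" if "w \<in> set ws" for w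
      using ws that sub unfolding chains_def by auto
    then show ?thesis unfolding t_def f_def by (simp add: kf_map)
  qed
  have "ennreal (real (length ws) - Vcost d2 z ws) = valT d2 z t"
    unfolding valT_def lt using Vcost_snd[OF sn] by simp
  also have "\<dots> = (if okT c z (fst (m, t)) (snd (m, t)) \<and> hits d2 \<xi> (fst (m, t)) (snd (m, t)) \<omega> then valT d2 z (snd (m, t)) else 0)"
    using ok hts by simp
  also have "\<dots> \<le> Tf d2 \<xi> c z \<omega>" unfolding Tf_def by (rule SUP_upper) simp
  also have "\<dots> \<le> (SUP n. Tf d2 \<xi> ((1/real (Suc n)) powr (1/real CARD('d1))) z \<omega>)"
    unfolding c_def d_def by (rule SUP_upper) simp
  finally show "ennreal (real (length ws) - Vcost d2 z ws) \<le> (SUP n. Tf d2 \<xi> ((1/real (Suc n)) powr (1/real CARD('d1))) z \<omega>)" .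
qed

lemma ES_le_SUP:
  fixes \<xi> :: "'w \<Rightarrow> 'd1::finite pt set" and z :: "real^'d1"
  assumes pp: "poisson_pp d2 M \<xi>"
  shows "ES d2 M \<xi> 0 z \<le> (SUP n. ES d2 M \<xi> (1 / real (Suc n)) z)"
proof -
  define c where "c n = (1/real (Suc n)) powr (1/real CARD('d1))" for n
  have pp': "prob_space M \<and>
     (\<forall>\<omega>\<in>space M. \<xi> \<omega> \<subseteq> UNIV \<times> latt d2) \<and>
     (\<forall>A\<in>pt_meas_sets d2. intensity d2 A < \<infinity> \<longrightarrow>
        count_in \<xi> A \<in> measurable M (count_space UNIV) \<and>
        (AE \<omega> in M. finite (\<xi> \<omega> \<inter> A)) \<and>
        (\<forall>n::nat. measure M {\<omega>\<in>space M. count_in \<xi> A \<omega> = n}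
            = exp (- enn2real (intensity d2 A)) * enn2real (intensity d2 A) ^ n / fact n)) \<and>
     (\<forall>I::nat set. \<forall>A. finite I \<longrightarrow> (\<forall>i\<in>I. A i \<in> pt_meas_sets d2 \<and> intensity d2 (A i) < \<infinity>)
        \<longrightarrow> disjoint_family_on A I
        \<longrightarrow> prob_space.indep_vars M (\<lambda>_. count_space UNIV) (\<lambda>i. count_in \<xi> (A i)) I)"
    using pp unfolding poisson_pp_def .
  have sub: "\<forall>\<omega>\<in>space M. \<xi> \<omega> \<subseteq> UNIV \<times> latt d2" using conjunct1[OF conjunct2[OF pp']] .
  have P3: "\<forall>A\<in>pt_meas_sets d2. intensity d2 A < \<infinity> \<longrightarrow> (AE \<omega> in M. finite (\<xi> \<omega> \<inter> A))"
    using conjunct1[OF conjunct2[OF conjunct2[OF pp']]] by simp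
  have AE: "AE \<omega> in M. \<forall>me::nat \<times> (('d1\<Rightarrow>int) \<times> int list). finite (\<xi> \<omega> \<inter> cell d2 (fst me) (snd me))"
    unfolding AE_all_countable
  proof
    fix me :: "nat \<times> (('d1\<Rightarrow>int) \<times> int list)"
    show "AE \<omega> in M. finite (\<xi> \<omega> \<inter> cell d2 (fst me) (snd me))"
      using P3 cell_ok[of d2 "fst me" "snd me"] by blast
  qed
  have "ES d2 M \<xi> 0 z \<le> (\<integral>\<^sup>+\<omega>. (SUP n. Tf d2 \<xi> (c n) z \<omega>) \<partial>M)"
    unfolding ES_def
  proof (rule nn_integral_mono_AE)
    show "AE \<omega> in M. S_C d2 0 (\<xi> \<omega>) z \<le> (SUP n. Tf d2 \<xi> (c n) z \<omega>)"
      using AE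
    proof (rule AE_mp)
      show "AE \<omega> in M. (\<forall>me::nat \<times> (('d1\<Rightarrow>int) \<times> int list). finite (\<xi> \<omega> \<inter> cell d2 (fst me) (snd me))) \<longrightarrow>
          S_C d2 0 (\<xi> \<omega>) z \<le> (SUP n. Tf d2 \<xi> (c n) z \<omega>)"
      proof (rule AE_I2, rule impI)
        fix \<omega> assume \<omega>: "\<omega> \<in> space M"
          and f: "\<forall>me::nat \<times> (('d1\<Rightarrow>int) \<times> int list). finite (\<xi> \<omega> \<inter> cell d2 (fst me) (snd me))"
        have "\<forall>m e. finite (\<xi> \<omega> \<inter> cell d2 m e)"
        proof (intro allI)
          fix m e show "finite (\<xi> \<omega> \<inter> cell d2 m e)" using f[rule_format, of "(m, e)"] by simp
        qed
        then show "S_C d2 0 (\<xi> \<omega>) z \<le> (SUP n. Tf d2 \<xi> (c n) z \<omega>)"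
          unfolding c_def using S0_le[of \<xi> \<omega> d2 z] sub \<omega> by blast
      qed
    qed
  qed
  also have "\<dots> = (SUP n. \<integral>\<^sup>+\<omega>. Tf d2 \<xi> (c n) z \<omega> \<partial>M)"
  proof (rule nn_integral_monotone_convergence_SUP)
    show "incseq (\<lambda>n. Tf d2 \<xi> (c n) z)"
    proof (rule incseq_SucI, rule le_funI)
      fix n \<omega>
      have "c (Suc n) \<le> c n" unfolding c_def
        by (intro powr_mono2) (auto simp: field_simps)
      then show "Tf d2 \<xi> (c n) z \<omega> \<le> Tf d2 \<xi> (c (Suc n)) z \<omega>" by (rule Tf_mono)
    qed
    show "Tf d2 \<xi> (c n) z \<in> borel_measurable M" for n by (rule Tf_meas[OF pp])
  qed
  also have "\<dots> \<le> (SUP n. ES d2 M \<xi> (1 / real (Suc n)) z)"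
  proof (rule SUP_mono)
    fix n
    show "\<exists>m\<in>UNIV. (\<integral>\<^sup>+\<omega>. Tf d2 \<xi> (c n) z \<omega> \<partial>M) \<le> ES d2 M \<xi> (1 / real (Suc m)) z"
    proof (rule bexI[of _ n])
      show "(\<integral>\<^sup>+\<omega>. Tf d2 \<xi> (c n) z \<omega> \<partial>M) \<le> ES d2 M \<xi> (1 / real (Suc n)) z"
        unfolding ES_def c_def by (rule nn_integral_mono) (rule Tf_le_S, simp)
    qed simp
  qed
  finally show ?thesis .
qed

lemma ES_limit:
  assumes "poisson_pp d2 M \<xi>"
  shows "ES d2 M \<xi> 0 z = (SUP n. ES d2 M \<xi> (1 / real (Suc n)) z)"
proof (rule antisym)
  show "ES d2 M \<xi> 0 z \<le> (SUP n. ES d2 M \<xi> (1 / real (Suc n)) z)"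
    by (rule ES_le_SUP[OF assms])
  show "(SUP n. ES d2 M \<xi> (1 / real (Suc n)) z) \<le> ES d2 M \<xi> 0 z"
    by (rule SUP_least) (rule ES_mono, auto)
qed

theorem mainTheorem9:
  fixes d2 :: nat and M :: "'w measure" and \<xi> :: "'w \<Rightarrow> 'd1::finite pt set"
    and z :: "real ^ 'd1"
  assumes "poisson_pp d2 M \<xi>"
    and "\<forall>i. 0 < z $ i"
  shows "(\<forall>\<alpha> \<beta>. 0 \<le> \<alpha> \<longrightarrow> \<alpha> \<le> \<beta> \<longrightarrow> ES d2 M \<xi> \<beta> z \<le> ES d2 M \<xi> \<alpha> z)
       \<and> (\<forall>\<alpha> \<beta>. 0 \<le> \<alpha> \<longrightarrow> \<alpha> \<le> \<beta> \<longrightarrow> sigma_C d2 M \<xi> \<beta> z \<le> sigma_C d2 M \<xi> \<alpha> z)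
       \<and> ((\<lambda>\<alpha>. ES d2 M \<xi> \<alpha> z) \<longlongrightarrow> ES d2 M \<xi> 0 z) (at_right 0)
       \<and> ((\<lambda>\<alpha>. sigma_C d2 M \<xi> \<alpha> z) \<longlongrightarrow> sigma_C d2 M \<xi> 0 z) (at_right 0)"
proof (intro conjI allI impI)
  fix \<alpha> \<beta> :: real assume h: "0 \<le> \<alpha>" "\<alpha> \<le> \<beta>"
  show "ES d2 M \<xi> \<beta> z \<le> ES d2 M \<xi> \<alpha> z" by (rule ES_mono[OF h])
next
  fix \<alpha> \<beta> :: real assume h: "0 \<le> \<alpha>" "\<alpha> \<le> \<beta>"
  show "sigma_C d2 M \<xi> \<beta> z \<le> sigma_C d2 M \<xi> \<alpha> z" by (rule sigma_mono[OF h])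
next
  show "((\<lambda>\<alpha>. ES d2 M \<xi> \<alpha> z) \<longlongrightarrow> ES d2 M \<xi> 0 z) (at_right 0)"
    by (rule lim_from_seq[where f="\<lambda>\<alpha>. ES d2 M \<xi> \<alpha> z", OF ES_mono ES_limit[OF assms(1)]])
next
  have "sigma_C d2 M \<xi> 0 z = (SUP t\<in>{0<..}. SUP n. ES d2 M \<xi> (1 / real (Suc n)) (t *\<^sub>R z) / ennreal t)"
    unfolding sigma_C_def ES_limit[OF assms(1)] SUP_divide_ennreal ..
  also have "\<dots> = (SUP n. sigma_C d2 M \<xi> (1 / real (Suc n)) z)"
    unfolding sigma_C_def by (rule SUP_commute)
  finally have eq: "sigma_C d2 M \<xi> 0 z = (SUP n. sigma_C d2 M \<xi> (1 / real (Suc n)) z)" .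
  show "((\<lambda>\<alpha>. sigma_C d2 M \<xi> \<alpha> z) \<longlongrightarrow> sigma_C d2 M \<xi> 0 z) (at_right 0)"
    by (rule lim_from_seq[where f="\<lambda>\<alpha>. sigma_C d2 M \<xi> \<alpha> z", OF sigma_mono eq])
qed

end
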